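(* Let $(M,J)$ be a complex manifold. Let $\mathcal S_{(M,J)}$ be the set of special connections on $(M,J)$, i.e. torsion-free flat connections $\nabla$ with $\nabla J$ symmetric, and let $\mathcal C_{(M,J)}$ be the set of pairs $(D,S)$ where $D$ is a torsion-free complex connection ($DJ=0$) and $S$ is a symmetric $(1,2)$-tensor anticommuting with $J$ such that $R^D=-[S,S]$ and $d^DS=0$. Then there is a natural bijection $\mathcal S_{(M,J)}\cong\mathcal C_{(M,J)}$, given by $\nabla\mapsto(\nabla-\frac12J\nabla J,\,-\frac12J\nabla J)$ with inverse $(D,S)\mapsto D-S$.
   Context: For a $(1,2)$-tensor $S$ (viewed as $\mathrm{End}(TM)$-valued 1-form $X\mapsto S_X$): symmetric means $S_XY=S_YX$; $[S,S]_{X,Y}=S_XS_Y-S_YS_X$; $(d^DS)(X,Y)=(D_XS)_Y-(D_YS)_X$; $(J\nabla J)_XY=J((\nabla_XJ)Y)$. $R^D_{X,Y}=D_XD_Y-D_YD_X-D_{[X,Y]}$. *)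

theory Defs
  imports Main "HOL.Real_Vector_Spaces"
begin

text \<open>
  Algebraic model of a complex manifold (M,J): 'f plays the role of the ring of
  smooth real functions C^\<infinity>(M) (a commutative real algebra), 'v the
  C^\<infinity>(M)-module of smooth vector fields, smul the module action, act X f the
  derivative X(f), br the Lie bracket of vector fields and J the (integrable)
  complex structure.
\<close>

definition vf_structure ::
  "('f::{comm_ring_1,real_algebra_1} \<Rightarrow> 'v::ab_group_add \<Rightarrow> 'v) \<Rightarrow> ('v \<Rightarrow> 'f \<Rightarrow> 'f)
   \<Rightarrow> ('v \<Rightarrow> 'v \<Rightarrow> 'v) \<Rightarrow> bool" where
  "vf_structure smul act br \<longleftrightarrow>
     (\<forall>a b v. smul (a * b) v = smul a (smul b v)) \<and>
     (\<forall>v. smul 1 v = v) \<and>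
     (\<forall>a b v. smul (a + b) v = smul a v + smul b v) \<and>
     (\<forall>a v w. smul a (v + w) = smul a v + smul a w) \<and>
     (\<forall>X Y f. act (X + Y) f = act X f + act Y f) \<and>
     (\<forall>g X f. act (smul g X) f = g * act X f) \<and>
     (\<forall>X f g. act X (f + g) = act X f + act X g) \<and>
     (\<forall>X f g. act X (f * g) = act X f * g + f * act X g) \<and>
     (\<forall>X c f. act X (scaleR c f) = scaleR c (act X f)) \<and>
     (\<forall>X Y f. act (br X Y) f = act X (act Y f) - act Y (act X f)) \<and>
     (\<forall>X Y. br X Y = - br Y X) \<and>
     (\<forall>X Y Z. br (X + Y) Z = br X Z + br Y Z) \<and>
     (\<forall>X Y Z. br X (br Y Z) + br Y (br Z X) + br Z (br X Y) = 0) \<and>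
     (\<forall>X f Y. br X (smul f Y) = smul (act X f) Y + smul f (br X Y))"

definition complex_structure ::
  "('f::{comm_ring_1,real_algebra_1} \<Rightarrow> 'v::ab_group_add \<Rightarrow> 'v) \<Rightarrow> ('v \<Rightarrow> 'v \<Rightarrow> 'v)
   \<Rightarrow> ('v \<Rightarrow> 'v) \<Rightarrow> bool" where
  "complex_structure smul br J \<longleftrightarrow>
     (\<forall>X Y. J (X + Y) = J X + J Y) \<and>
     (\<forall>f X. J (smul f X) = smul f (J X)) \<and>
     (\<forall>X. J (J X) = - X) \<and>
     (\<comment> \<open>integrability: vanishing Nijenhuis tensor\<close>
      \<forall>X Y. br (J X) (J Y) - J (br (J X) Y) - J (br X (J Y)) - br X Y = 0)"

text \<open>A (linear) connection: D X Y = D_X Y.\<close>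
definition connection ::
  "('f::comm_ring_1 \<Rightarrow> 'v::ab_group_add \<Rightarrow> 'v) \<Rightarrow> ('v \<Rightarrow> 'f \<Rightarrow> 'f)
   \<Rightarrow> ('v \<Rightarrow> 'v \<Rightarrow> 'v) \<Rightarrow> bool" where
  "connection smul act D \<longleftrightarrow>
     (\<forall>X Y Z. D (X + Y) Z = D X Z + D Y Z) \<and>
     (\<forall>f X Y. D (smul f X) Y = smul f (D X Y)) \<and>
     (\<forall>X Y Z. D X (Y + Z) = D X Y + D X Z) \<and>
     (\<forall>X f Y. D X (smul f Y) = smul (act X f) Y + smul f (D X Y))"

text \<open>A (1,2)-tensor S, viewed as X \<mapsto> S_X, with S X Y = S_X Y.\<close>
definition tensor12 ::
  "('f::comm_ring_1 \<Rightarrow> 'v::ab_group_add \<Rightarrow> 'v) \<Rightarrow> ('v \<Rightarrow> 'v \<Rightarrow> 'v) \<Rightarrow> bool" where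
  "tensor12 smul S \<longleftrightarrow>
     (\<forall>X Y Z. S (X + Y) Z = S X Z + S Y Z) \<and>
     (\<forall>f X Y. S (smul f X) Y = smul f (S X Y)) \<and>
     (\<forall>X Y Z. S X (Y + Z) = S X Y + S X Z) \<and>
     (\<forall>f X Y. S X (smul f Y) = smul f (S X Y))"

definition torsion_free :: "('v::ab_group_add \<Rightarrow> 'v \<Rightarrow> 'v) \<Rightarrow> ('v \<Rightarrow> 'v \<Rightarrow> 'v) \<Rightarrow> bool" where
  "torsion_free br D \<longleftrightarrow> (\<forall>X Y. D X Y - D Y X - br X Y = 0)"

definition curvature ::
  "('v::ab_group_add \<Rightarrow> 'v \<Rightarrow> 'v) \<Rightarrow> ('v \<Rightarrow> 'v \<Rightarrow> 'v) \<Rightarrow> 'v \<Rightarrow> 'v \<Rightarrow> 'v \<Rightarrow> 'v" where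
  "curvature br D X Y Z = D X (D Y Z) - D Y (D X Z) - D (br X Y) Z"

definition flat :: "('v::ab_group_add \<Rightarrow> 'v \<Rightarrow> 'v) \<Rightarrow> ('v \<Rightarrow> 'v \<Rightarrow> 'v) \<Rightarrow> bool" where
  "flat br D \<longleftrightarrow> (\<forall>X Y Z. curvature br D X Y Z = 0)"

definition covJ :: "('v::ab_group_add \<Rightarrow> 'v \<Rightarrow> 'v) \<Rightarrow> ('v \<Rightarrow> 'v) \<Rightarrow> 'v \<Rightarrow> 'v \<Rightarrow> 'v" where
  "covJ D J X Y = D X (J Y) - J (D X Y)"

definition JnablaJ :: "('v::ab_group_add \<Rightarrow> 'v \<Rightarrow> 'v) \<Rightarrow> ('v \<Rightarrow> 'v) \<Rightarrow> 'v \<Rightarrow> 'v \<Rightarrow> 'v" where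
  "JnablaJ D J X Y = J (covJ D J X Y)"

definition symmetric12 :: "('v \<Rightarrow> 'v \<Rightarrow> 'v) \<Rightarrow> bool" where
  "symmetric12 S \<longleftrightarrow> (\<forall>X Y. S X Y = S Y X)"

definition anticommutes_J :: "('v::ab_group_add \<Rightarrow> 'v \<Rightarrow> 'v) \<Rightarrow> ('v \<Rightarrow> 'v) \<Rightarrow> bool" where
  "anticommutes_J S J \<longleftrightarrow> (\<forall>X Y. S X (J Y) = - J (S X Y))"

definition bracketSS :: "('v::ab_group_add \<Rightarrow> 'v \<Rightarrow> 'v) \<Rightarrow> 'v \<Rightarrow> 'v \<Rightarrow> 'v \<Rightarrow> 'v" where
  "bracketSS S X Y Z = S X (S Y Z) - S Y (S X Z)"

definition covS :: "('v::ab_group_add \<Rightarrow> 'v \<Rightarrow> 'v) \<Rightarrow> ('v \<Rightarrow> 'v \<Rightarrow> 'v) \<Rightarrow> 'v \<Rightarrow> 'v \<Rightarrow> 'v \<Rightarrow> 'v" where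
  "covS D S X Y Z = D X (S Y Z) - S (D X Y) Z - S Y (D X Z)"

definition dD :: "('v::ab_group_add \<Rightarrow> 'v \<Rightarrow> 'v) \<Rightarrow> ('v \<Rightarrow> 'v \<Rightarrow> 'v) \<Rightarrow> 'v \<Rightarrow> 'v \<Rightarrow> 'v \<Rightarrow> 'v" where
  "dD D S X Y Z = covS D S X Y Z - covS D S Y X Z"

definition special_connections where
  "special_connections smul act br J =
     {N. connection smul act N \<and> torsion_free br N \<and> flat br N \<and> symmetric12 (covJ N J)}"

definition C_pairs where
  "C_pairs smul act br J =
     {(D, S). connection smul act D \<and> torsion_free br D \<and> (\<forall>X Y. D X (J Y) = J (D X Y)) \<and>
        tensor12 smul S \<and> symmetric12 S \<and> anticommutes_J S J \<and>
        (\<forall>X Y Z. curvature br D X Y Z = - bracketSS S X Y Z) \<and>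
        (\<forall>X Y Z. dD D S X Y Z = 0)}"

definition to_pair where
  "to_pair smul J N =
     ((\<lambda>X Y. N X Y - smul (of_real (1/2)) (JnablaJ N J X Y)),
      (\<lambda>X Y. - smul (of_real (1/2)) (JnablaJ N J X Y)))"

definition from_pair :: "('v::ab_group_add \<Rightarrow> 'v \<Rightarrow> 'v) \<times> ('v \<Rightarrow> 'v \<Rightarrow> 'v) \<Rightarrow> 'v \<Rightarrow> 'v \<Rightarrow> 'v" where
  "from_pair p = (\<lambda>X Y. fst p X Y - snd p X Y)"

end

theory Submission
  imports Defs
begin

lemma addhom:
  assumes "\<And>a b. f (a + b) = f a + (f b :: 'b::ab_group_add)"
  shows "f (0::'a::ab_group_add) = 0" "f (- a) = - f a" "f (a - b) = f a - f b"
proof -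
  have "f 0 = f 0 + f 0" using assms[of 0 0] by simp
  then show z: "f (0::'a) = 0" by simp
  have "f a + f (- a) = 0" using assms[of a "- a"] z by simp
  then show "f (- a) = - f a" by (simp add: eq_neg_iff_add_eq_0 add.commute)
  have "f (- b) = - f b" using assms[of b "- b"] z by (simp add: eq_neg_iff_add_eq_0 add.commute)
  then show "f (a - b) = f a - f b" using assms[of a "- b"] by simp
qed

lemma conn_lin:
  assumes "connection smul act D"
  shows "D (X + Y) Z = D X Z + D Y Z" "D (smul f X) Y = smul f (D X Y)"
    "D X (Y + Z) = D X Y + D X Z" "D X (smul f Y) = smul (act X f) Y + smul f (D X Y)"
    "D X 0 = 0" "D X (- Y) = - D X Y" "D X (Y - Z) = D X Y - D X Z"
    "D 0 Y = 0" "D (- X) Y = - D X Y" "D (X - Z) Y = D X Y - D Z Y"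
  using assms addhom[of "D X"] addhom[of "\<lambda>X. D X Y"] unfolding connection_def by auto

lemma ten_lin:
  assumes "tensor12 smul D"
  shows "D (X + Y) Z = D X Z + D Y Z" "D (smul f X) Y = smul f (D X Y)"
    "D X (Y + Z) = D X Y + D X Z" "D X (smul f Y) = smul f (D X Y)"
    "D X 0 = 0" "D X (- Y) = - D X Y" "D X (Y - Z) = D X Y - D X Z"
    "D 0 Y = 0" "D (- X) Y = - D X Y" "D (X - Z) Y = D X Y - D Z Y"
  using assms addhom[of "D X"] addhom[of "\<lambda>X. D X Y"] unfolding tensor12_def by auto

locale cx =
  fixes smul :: "'f::{comm_ring_1,real_algebra_1} \<Rightarrow> 'v::ab_group_add \<Rightarrow> 'v"
    and act :: "'v \<Rightarrow> 'f \<Rightarrow> 'f"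
    and br :: "'v \<Rightarrow> 'v \<Rightarrow> 'v"
    and J :: "'v \<Rightarrow> 'v"
  assumes vf: "vf_structure smul act br"
    and cs: "complex_structure smul br J"
begin

lemma smul_add: "smul a (v + w) = smul a v + smul a w"
  using vf unfolding vf_structure_def by metis
lemma smul_addl: "smul (a + b) v = smul a v + smul b v"
  using vf unfolding vf_structure_def by metis
lemma smul_mult: "smul (a * b) v = smul a (smul b v)"
  using vf unfolding vf_structure_def by metis
lemma smul_one: "smul 1 v = v"
  using vf unfolding vf_structure_def by metis
lemma act_mult: "act X (f * g) = act X f * g + f * act X g"
  using vf unfolding vf_structure_def by metis
lemma act_scaleR: "act X (scaleR c f) = scaleR c (act X f)"
  using vf unfolding vf_structure_def by metis
lemma J_add: "J (X + Y) = J X + J Y"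
  using cs unfolding complex_structure_def by metis
lemma J_smul: "J (smul f X) = smul f (J X)"
  using cs unfolding complex_structure_def by metis
lemma JJ: "J (J X) = - X"
  using cs unfolding complex_structure_def by metis

lemma smul_zero: "smul a 0 = 0" and smul_minus: "smul a (- v) = - smul a v"
  and smul_diff: "smul a (v - w) = smul a v - smul a w"
  using addhom[of "smul a", OF smul_add] by auto
lemma smul_zerol: "smul 0 v = 0"
  using addhom[of "\<lambda>a. smul a v", OF smul_addl] by auto
lemma J_zero: "J 0 = 0" and J_minus: "J (- v) = - J v"
  and J_diff: "J (v - w) = J v - J w"
  using addhom[of J, OF J_add] by auto

lemma act_one: "act X 1 = 0"
  using act_mult[of X 1 1] by simp
lemma act_ofreal: "act X (of_real c) = 0"
  unfolding of_real_def using act_scaleR[of X c 1] act_one by simp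

abbreviation H where "H v \<equiv> smul (of_real (1/2)) v"

lemma half: "H v + H v = v"
proof -
  have "H v + H v = smul (of_real (1/2) + of_real (1/2)) v" by (rule smul_addl[symmetric])
  also have "of_real (1/2) + of_real (1/2) = (1::'f)"
    by (metis of_real_1 of_real_add field_sum_of_halves)
  finally show ?thesis by (simp add: smul_one)
qed

lemma half_comm: "H (smul f v) = smul f (H v)"
  by (metis smul_mult mult.commute)

lemmas basic = smul_add smul_zero smul_minus smul_diff J_add J_smul JJ J_zero J_minus J_diff

lemma covJ_smul:
  assumes "connection smul act N"
  shows "covJ N J X (smul f Y) = smul f (covJ N J X Y)"
  unfolding covJ_def using assms by (simp add: conn_lin basic)

lemma covJ_J:
  assumes "connection smul act N"
  shows "covJ N J X (J Y) = - J (covJ N J X Y)"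
  unfolding covJ_def using assms by (simp add: conn_lin basic)

definition SN where "SN N = (\<lambda>X Y. - H (J (covJ N J X Y)))"

lemma SN_tensor:
  assumes "connection smul act N"
  shows "tensor12 smul (SN N)"
  unfolding tensor12_def SN_def
  using assms by (auto simp: covJ_smul half_comm basic conn_lin covJ_def)

lemma SN_anti:
  assumes "connection smul act N"
  shows "anticommutes_J (SN N) J"
  unfolding anticommutes_J_def SN_def using assms by (simp add: covJ_J basic)

lemma SN_sym:
  assumes "symmetric12 (covJ N J)"
  shows "symmetric12 (SN N)"
  using assms unfolding symmetric12_def SN_def by simp

lemma SN_rel: "J (SN N X Y) + J (SN N X Y) = covJ N J X Y"
  unfolding SN_def by (simp add: basic half)

lemma sum_conn:
  assumes "connection smul act N" "tensor12 smul S"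
  shows "connection smul act (\<lambda>X Y. N X Y + S X Y)"
  using assms unfolding connection_def tensor12_def by (simp add: smul_add algebra_simps)

lemma diff_conn:
  assumes "connection smul act N" "tensor12 smul S"
  shows "connection smul act (\<lambda>X Y. N X Y - S X Y)"
  using assms unfolding connection_def tensor12_def by (simp add: smul_diff algebra_simps)

lemma curv_diff:
  assumes D: "connection smul act D" and S: "tensor12 smul S" and T: "torsion_free br D"
  shows "curvature br (\<lambda>X Y. D X Y - S X Y) X Y Z
       = curvature br D X Y Z + bracketSS S X Y Z - dD D S X Y Z"
proof -
  have b: "br X Y = D X Y - D Y X" using T unfolding torsion_free_def by (metis eq_iff_diff_eq_0 diff_diff_eq2 diff_add_cancel)
  show ?thesis
    unfolding curvature_def bracketSS_def dD_def covS_def b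
    by (simp add: conn_lin[OF D] ten_lin[OF S])
qed

lemma split0:
  assumes "P Z + Q Z = 0" "P (J Z) + Q (J Z) = 0"
    "P (J Z) = J (P Z)" "Q (J Z) = - J (Q Z)"
  shows "P Z = 0 \<and> Q Z = 0"
proof -
  have "J (P Z - Q Z) = 0" using assms(2-4) by (simp add: basic)
  then have "J (J (P Z - Q Z)) = 0" by (simp add: basic)
  then have e: "P Z = Q Z" by (simp add: basic)
  then have "P Z + P Z = 0" using assms(1) by simp
  then have "H (P Z + P Z) = 0" by (simp add: smul_zero)
  then have "P Z = 0" by (simp add: smul_add half)
  with e show ?thesis by simp
qed

lemma curv_J:
  assumes D: "connection smul act D" and c: "\<And>X Y. D X (J Y) = J (D X Y)"
  shows "curvature br D X Y (J Z) = J (curvature br D X Y Z)"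
  unfolding curvature_def by (simp add: c basic)

lemma brSS_J:
  assumes S: "tensor12 smul S" and a: "anticommutes_J S J"
  shows "bracketSS S X Y (J Z) = J (bracketSS S X Y Z)"
proof -
  have c: "\<And>X Y. S X (J Y) = - J (S X Y)" using a unfolding anticommutes_J_def by blast
  show ?thesis unfolding bracketSS_def by (simp add: c basic ten_lin[OF S])
qed

lemma dD_J:
  assumes D: "connection smul act D" and c: "\<And>X Y. D X (J Y) = J (D X Y)"
    and S: "tensor12 smul S" and a: "anticommutes_J S J"
  shows "dD D S X Y (J Z) = - J (dD D S X Y Z)"
proof -
  have c2: "\<And>X Y. S X (J Y) = - J (S X Y)" using a unfolding anticommutes_J_def by blast
  show ?thesis unfolding dD_def covS_def by (simp add: c c2 basic ten_lin[OF S] conn_lin[OF D] algebra_simps)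
qed

lemma flat_iff:
  assumes D: "connection smul act D" and c: "\<And>X Y. D X (J Y) = J (D X Y)"
    and S: "tensor12 smul S" and a: "anticommutes_J S J" and T: "torsion_free br D"
  shows "flat br (\<lambda>X Y. D X Y - S X Y) \<longleftrightarrow>
     ((\<forall>X Y Z. curvature br D X Y Z = - bracketSS S X Y Z) \<and> (\<forall>X Y Z. dD D S X Y Z = 0))"
proof
  assume f: "flat br (\<lambda>X Y. D X Y - S X Y)"
  have *: "curvature br D X Y Z + bracketSS S X Y Z = 0 \<and> - dD D S X Y Z = 0" for X Y Z
  proof (rule split0[where P="\<lambda>Z. curvature br D X Y Z + bracketSS S X Y Z" and Q="\<lambda>Z. - dD D S X Y Z"])
    show "curvature br D X Y Z + bracketSS S X Y Z + - dD D S X Y Z = 0"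
      using f curv_diff[OF D S T, of X Y Z] unfolding flat_def by simp
    show "curvature br D X Y (J Z) + bracketSS S X Y (J Z) + - dD D S X Y (J Z) = 0"
      using f curv_diff[OF D S T, of X Y "J Z"] unfolding flat_def by simp
    show "curvature br D X Y (J Z) + bracketSS S X Y (J Z) = J (curvature br D X Y Z + bracketSS S X Y Z)"
      by (simp add: curv_J[OF D c] brSS_J[OF S a] basic)
    show "- dD D S X Y (J Z) = - J (- dD D S X Y Z)"
      by (simp add: dD_J[OF D c S a] basic)
  qed
  then show "(\<forall>X Y Z. curvature br D X Y Z = - bracketSS S X Y Z) \<and> (\<forall>X Y Z. dD D S X Y Z = 0)"
    by (simp add: eq_neg_iff_add_eq_0)
next
  assume "(\<forall>X Y Z. curvature br D X Y Z = - bracketSS S X Y Z) \<and> (\<forall>X Y Z. dD D S X Y Z = 0)"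
  then show "flat br (\<lambda>X Y. D X Y - S X Y)"
    unfolding flat_def using curv_diff[OF D S T] by simp
qed

lemma to_pair_eq: "to_pair smul J N = ((\<lambda>X Y. N X Y + SN N X Y), SN N)"
  unfolding to_pair_def SN_def JnablaJ_def by (simp add: fun_eq_iff)

lemma dir1:
  assumes "N \<in> special_connections smul act br J"
  shows "to_pair smul J N \<in> C_pairs smul act br J"
proof -
  have N: "connection smul act N" and T: "torsion_free br N" and F: "flat br N"
    and Sy: "symmetric12 (covJ N J)"
    using assms unfolding special_connections_def by auto
  define S where "S = SN N"
  define D where "D = (\<lambda>X Y. N X Y + S X Y)"
  have St: "tensor12 smul S" unfolding S_def by (rule SN_tensor[OF N])
  have Sa: "anticommutes_J S J" unfolding S_def by (rule SN_anti[OF N])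
  have Ss: "symmetric12 S" unfolding S_def by (rule SN_sym[OF Sy])
  have Dc: "connection smul act D" unfolding D_def by (rule sum_conn[OF N St])
  have DT: "torsion_free br D" unfolding torsion_free_def
  proof (intro allI)
    fix X Y
    have e: "D X Y - D Y X - br X Y = (N X Y - N Y X - br X Y) + (S X Y - S Y X)"
      unfolding D_def by (simp add: algebra_simps)
    have "N X Y - N Y X - br X Y = 0" using T unfolding torsion_free_def by blast
    moreover have "S X Y = S Y X" using Ss unfolding symmetric12_def by blast
    ultimately show "D X Y - D Y X - br X Y = 0" unfolding e by simp
  qed
  have DJ: "D X (J Y) = J (D X Y)" for X Y
  proof -
    have "N X (J Y) - J (N X Y) = J (S X Y) + J (S X Y)"
      using SN_rel[of N X Y] unfolding S_def covJ_def by simp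
    moreover have "S X (J Y) = - J (S X Y)" using Sa unfolding anticommutes_J_def by blast
    ultimately have "N X (J Y) = J (N X Y) + (J (S X Y) + J (S X Y))" and "S X (J Y) = - J (S X Y)"
      by (simp_all add: diff_eq_eq)
    then have "D X (J Y) = J (N X Y) + J (S X Y) + J (S X Y) - J (S X Y)"
      unfolding D_def by (simp add: add.assoc)
    then show ?thesis unfolding D_def by (simp add: J_add)
  qed
  have eqN: "(\<lambda>X Y. D X Y - S X Y) = N" unfolding D_def by (simp add: fun_eq_iff)
  have "(\<forall>X Y Z. curvature br D X Y Z = - bracketSS S X Y Z) \<and> (\<forall>X Y Z. dD D S X Y Z = 0)"
    using flat_iff[OF Dc DJ St Sa DT] F eqN by simp
  then have "(D, S) \<in> C_pairs smul act br J"
    unfolding C_pairs_def using Dc DT DJ St Ss Sa by auto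
  then show ?thesis unfolding to_pair_eq D_def S_def .
qed

lemma dir1b: "from_pair (to_pair smul J N) = N"
  unfolding to_pair_def from_pair_def by (simp add: fun_eq_iff)

lemma dir2:
  assumes "p \<in> C_pairs smul act br J"
  shows "from_pair p \<in> special_connections smul act br J \<and> to_pair smul J (from_pair p) = p"
proof -
  obtain D S where p: "p = (D, S)" by (cases p)
  have Dc: "connection smul act D" and DT: "torsion_free br D" and DJ: "\<And>X Y. D X (J Y) = J (D X Y)"
    and St: "tensor12 smul S" and Ss: "symmetric12 S" and Sa: "anticommutes_J S J"
    and R: "(\<forall>X Y Z. curvature br D X Y Z = - bracketSS S X Y Z) \<and> (\<forall>X Y Z. dD D S X Y Z = 0)"
    using assms unfolding p C_pairs_def by auto
  have fp: "from_pair p = (\<lambda>X Y. D X Y - S X Y)" unfolding p from_pair_def by simp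
  have Sa': "\<And>X Y. S X (J Y) = - J (S X Y)" using Sa unfolding anticommutes_J_def by blast
  have cJ: "covJ (from_pair p) J X Y = J (S X Y) + J (S X Y)" for X Y
    unfolding fp covJ_def by (simp add: DJ Sa' basic)
  have "from_pair p \<in> special_connections smul act br J"
    unfolding special_connections_def
  proof (intro CollectI conjI)
    show "connection smul act (from_pair p)" unfolding fp by (rule diff_conn[OF Dc St])
    show "torsion_free br (from_pair p)" unfolding torsion_free_def
    proof (intro allI)
      fix X Y
      have e: "from_pair p X Y - from_pair p Y X - br X Y = (D X Y - D Y X - br X Y) - (S X Y - S Y X)"
        unfolding fp by (simp add: algebra_simps)
      have "D X Y - D Y X - br X Y = 0" using DT unfolding torsion_free_def by blast
      moreover have "S X Y = S Y X" using Ss unfolding symmetric12_def by blast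
      ultimately show "from_pair p X Y - from_pair p Y X - br X Y = 0" unfolding e by simp
    qed
    show "flat br (from_pair p)" unfolding fp using flat_iff[OF Dc DJ St Sa DT] R by simp
    show "symmetric12 (covJ (from_pair p) J)" unfolding symmetric12_def cJ using Ss
      unfolding symmetric12_def by simp
  qed
  moreover have "to_pair smul J (from_pair p) = p"
  proof -
    have "JnablaJ (from_pair p) J X Y = - (S X Y + S X Y)" for X Y
      unfolding JnablaJ_def cJ by (simp add: basic)
    then have "H (JnablaJ (from_pair p) J X Y) = - S X Y" for X Y
      by (simp only: smul_minus smul_add half)
    then have "to_pair smul J (from_pair p) = (D, S)"
      unfolding to_pair_def by (simp add: fun_eq_iff fp)
    then show ?thesis using p by simp
  qed
  ultimately show ?thesis by simp
qed

end

theorem lemma2p3: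
  fixes smul :: "'f::{comm_ring_1,real_algebra_1} \<Rightarrow> 'v::ab_group_add \<Rightarrow> 'v"
    and act :: "'v \<Rightarrow> 'f \<Rightarrow> 'f"
    and br :: "'v \<Rightarrow> 'v \<Rightarrow> 'v"
    and J :: "'v \<Rightarrow> 'v"
  assumes "vf_structure smul act br"
    and "complex_structure smul br J"
  shows "bij_betw (to_pair smul J) (special_connections smul act br J) (C_pairs smul act br J)
       \<and> (\<forall>p \<in> C_pairs smul act br J.
            from_pair p \<in> special_connections smul act br J \<and> to_pair smul J (from_pair p) = p)"
proof -
  interpret cx smul act br J using assms by unfold_locales
  have B: "\<forall>p \<in> C_pairs smul act br J.
            from_pair p \<in> special_connections smul act br J \<and> to_pair smul J (from_pair p) = p"
    using dir2 by blast
  have "bij_betw (to_pair smul J) (special_connections smul act br J) (C_pairs smul act br J)"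
    by (rule bij_betw_byWitness[where f'=from_pair]) (use dir1 dir1b B in auto)
  with B show ?thesis by blast
qed

end
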